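(* For every finite metric space $X$, $\zeta(X;1/8)\le \alpha_X$.
   Context: Let $(X,d)$ be a finite metric space; $B(x,r)$ denotes the ball of radius $r$ about $x$. Random zero sets: given $\Delta,\zeta>0$ and $p\in(0,1)$, $X$ admits a random zero set at scale $\Delta$ which is $\zeta$-spreading with probability $p$ if there is a probability distribution $\mu$ over subsets $Z\subseteq X$ such that for all $x,y\in X$ with $d(x,y)\ge\Delta$, $\mu\{Z: y\in Z \text{ and } d(x,Z)\ge \Delta/\zeta\}\ge p$. $\zeta(X;p)$ is the least $\zeta>0$ such that for every $\Delta>0$, $X$ admits a random zero set at scale $\Delta$ which is $\zeta$-spreading with probability $p$. Padded decompositions: for a partition $P$ of $X$ and $x\in X$, $P(x)$ denotes the element of $P$ containing $x$. An $\alpha$-padded decomposition bundle of $X$ is, for every $\Delta>0$, a random partition $P_\Delta$ of $X$ with distribution $\nu$ such that (1) for every $P$ in the support of $\nu$ and every $C\in P$, $\mathrm{diam}(C)<\Delta$; (2) for every $x\in X$, $\nu\{P: B(x,\Delta/\alpha)\subseteq P(x)\}\ge 1/2$. The modulus of padded decomposability $\alpha_X$ is the largest $\alpha>0$ such that $X$ admits an $\alpha$-padded decomposition bundle. *)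

theory Defs
  imports "HOL-Analysis.Analysis" "HOL-Probability.Probability" "HOL-Library.Disjoint_Sets"
begin

definition finite_metric_space :: "'a set \<Rightarrow> ('a \<Rightarrow> 'a \<Rightarrow> real) \<Rightarrow> bool" where
  "finite_metric_space X d \<longleftrightarrow> Metric_space X d \<and> finite X"

definition setdist_pt :: "('a \<Rightarrow> 'a \<Rightarrow> real) \<Rightarrow> 'a \<Rightarrow> 'a set \<Rightarrow> real" where
  "setdist_pt d x Z = (INF z\<in>Z. d x z)"

definition ball_in :: "'a set \<Rightarrow> ('a \<Rightarrow> 'a \<Rightarrow> real) \<Rightarrow> 'a \<Rightarrow> real \<Rightarrow> 'a set" where
  "ball_in X d x r = Metric_space.mcball X d x r"

definition random_zero_set :: "'a set \<Rightarrow> ('a \<Rightarrow> 'a \<Rightarrow> real) \<Rightarrow> real \<Rightarrow> real \<Rightarrow> real \<Rightarrow> bool" where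
  "random_zero_set X d \<Delta> \<zeta> p \<longleftrightarrow>
     (\<exists>\<mu> :: 'a set pmf. set_pmf \<mu> \<subseteq> Pow X \<and>
        (\<forall>x\<in>X. \<forall>y\<in>X. d x y \<ge> \<Delta> \<longrightarrow>
           measure_pmf.prob \<mu> {Z. y \<in> Z \<and> setdist_pt d x Z \<ge> \<Delta> / \<zeta>} \<ge> p))"

definition zeta_X :: "'a set \<Rightarrow> ('a \<Rightarrow> 'a \<Rightarrow> real) \<Rightarrow> real \<Rightarrow> real" where
  "zeta_X X d p = Inf {\<zeta>. \<zeta> > 0 \<and> (\<forall>\<Delta>>0. random_zero_set X d \<Delta> \<zeta> p)}"

definition cluster :: "'a set set \<Rightarrow> 'a \<Rightarrow> 'a set" where
  "cluster P x = (THE C. C \<in> P \<and> x \<in> C)"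

definition padded_random_partition :: "'a set \<Rightarrow> ('a \<Rightarrow> 'a \<Rightarrow> real) \<Rightarrow> real \<Rightarrow> real \<Rightarrow> 'a set set pmf \<Rightarrow> bool" where
  "padded_random_partition X d \<alpha> \<Delta> \<nu> \<longleftrightarrow>
     (\<forall>P\<in>set_pmf \<nu>. partition_on X P \<and> (\<forall>C\<in>P. \<forall>u\<in>C. \<forall>v\<in>C. d u v < \<Delta>)) \<and>
     (\<forall>x\<in>X. measure_pmf.prob \<nu> {P. ball_in X d x (\<Delta> / \<alpha>) \<subseteq> cluster P x} \<ge> 1/2)"

definition padded_decomposition_bundle :: "'a set \<Rightarrow> ('a \<Rightarrow> 'a \<Rightarrow> real) \<Rightarrow> real \<Rightarrow> bool" where
  "padded_decomposition_bundle X d \<alpha> \<longleftrightarrow>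
     (\<forall>\<Delta>>0. \<exists>\<nu>. padded_random_partition X d \<alpha> \<Delta> \<nu>)"

definition alpha_X :: "'a set \<Rightarrow> ('a \<Rightarrow> 'a \<Rightarrow> real) \<Rightarrow> real" where
  "alpha_X X d = Inf {\<alpha>. \<alpha> > 0 \<and> padded_decomposition_bundle X d \<alpha>}"

end

theory Submission imports Defs begin

lemma coin_prob:
  assumes "finite A" "a \<in> A" "b \<in> A" "a \<noteq> b"
  shows "measure_pmf.prob (Pi_pmf A False (\<lambda>_. bernoulli_pmf (1/2))) {\<sigma>. \<sigma> a = False \<and> \<sigma> b = True} = 1/4"
proof -
  define B where "B = (\<lambda>c. if c = a then {False} else if c = b then {True} else (UNIV::bool set))"
  have eq: "{\<sigma>. \<sigma> a = False \<and> \<sigma> b = True} \<inter> UNIV = Pi A B \<inter> UNIV"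
    using assms by (auto simp: B_def Pi_def split: if_splits)
  have "measure_pmf.prob (Pi_pmf A False (\<lambda>_. bernoulli_pmf (1/2))) (Pi A B)
      = (\<Prod>c\<in>A. measure_pmf.prob (bernoulli_pmf (1/2)) (B c))"
    by (rule measure_Pi_pmf_Pi[OF assms(1)])
  also have "\<dots> = (\<Prod>c\<in>A. (if c = a then 1/2 else if c = b then 1/2 else 1))"
    by (intro prod.cong refl) (auto simp: B_def measure_pmf_single)
  also have "\<dots> = (\<Prod>c\<in>{a,b}. (if c = a then 1/2 else if c = b then 1/2 else (1::real)))"
    using assms by (intro prod.mono_neutral_right) auto
  also have "\<dots> = 1/4" using assms by simp
  finally show ?thesis using eq by simp
qed

lemma cluster_eq:
  assumes "partition_on X P" "C \<in> P" "z \<in> C"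
  shows "cluster P z = C"
  unfolding cluster_def
proof (rule the_equality)
  show "C \<in> P \<and> z \<in> C" using assms by auto
  fix C' assume "C' \<in> P \<and> z \<in> C'"
  then show "C' = C" using assms unfolding partition_on_def disjoint_def by blast
qed

lemma cluster_in:
  assumes "partition_on X P" "z \<in> X"
  shows "cluster P z \<in> P \<and> z \<in> cluster P z"
proof -
  obtain C where "C \<in> P" "z \<in> C" using assms unfolding partition_on_def by blast
  then show ?thesis using cluster_eq[OF assms(1)] by simp
qed


lemma zero_set_from_partition:
  assumes ms: "Metric_space X d" and fin: "finite X" and ap: "\<alpha> > 0" and dp: "\<Delta> > 0"
    and pr: "padded_random_partition X d \<alpha> \<Delta> \<nu>"
  shows "random_zero_set X d \<Delta> \<alpha> (1/8)"
proof -
  interpret M: Metric_space X d by (fact ms)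
  define \<tau> where "\<tau> = Pi_pmf (Pow X) False (\<lambda>_. bernoulli_pmf (1/2))"
  define g where "g = (\<lambda>P (\<sigma>::'a set \<Rightarrow> bool). {z\<in>X. \<sigma> (cluster P z)})"
  define \<mu> where "\<mu> = bind_pmf \<nu> (\<lambda>P. map_pmf (g P) \<tau>)"
  have part: "\<And>P. P \<in> set_pmf \<nu> \<Longrightarrow> partition_on X P \<and> (\<forall>C\<in>P. \<forall>u\<in>C. \<forall>v\<in>C. d u v < \<Delta>)"
    using pr unfolding padded_random_partition_def by blast
  have pad: "\<And>x. x \<in> X \<Longrightarrow> measure_pmf.prob \<nu> {P. ball_in X d x (\<Delta> / \<alpha>) \<subseteq> cluster P x} \<ge> 1/2"
    using pr unfolding padded_random_partition_def by blast
  have "set_pmf \<mu> \<subseteq> Pow X" unfolding \<mu>_def g_def by auto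
  moreover have "measure_pmf.prob \<mu> {Z. y \<in> Z \<and> setdist_pt d x Z \<ge> \<Delta> / \<alpha>} \<ge> 1/8"
    if x: "x \<in> X" and y: "y \<in> X" and dxy: "d x y \<ge> \<Delta>" for x y
  proof -
    define E where "E = {Z. y \<in> Z \<and> setdist_pt d x Z \<ge> \<Delta> / \<alpha>}"
    define G where "G = {P. P \<in> set_pmf \<nu> \<and> ball_in X d x (\<Delta> / \<alpha>) \<subseteq> cluster P x}"
    have key: "measure_pmf.prob (map_pmf (g P) \<tau>) E \<ge> 1/4" if PG: "P \<in> G" for P
    proof -
      have pP: "partition_on X P" and diam: "\<forall>C\<in>P. \<forall>u\<in>C. \<forall>v\<in>C. d u v < \<Delta>"
        using part PG unfolding G_def by auto
      have bP: "ball_in X d x (\<Delta> / \<alpha>) \<subseteq> cluster P x" using PG unfolding G_def by auto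
      have cx: "cluster P x \<in> P" "x \<in> cluster P x" using cluster_in[OF pP x] by auto
      have cy: "cluster P y \<in> P" "y \<in> cluster P y" using cluster_in[OF pP y] by auto
      have ne: "cluster P x \<noteq> cluster P y"
        using diam cx cy dxy by force
      have pw: "cluster P x \<in> Pow X" "cluster P y \<in> Pow X"
        using cx cy pP unfolding partition_on_def by auto
      have sub: "{\<sigma>. \<sigma> (cluster P x) = False \<and> \<sigma> (cluster P y) = True} \<subseteq> g P -` E"
      proof
        fix \<sigma> assume s: "\<sigma> \<in> {\<sigma>. \<sigma> (cluster P x) = False \<and> \<sigma> (cluster P y) = True}"
        have yin: "y \<in> g P \<sigma>" using s y unfolding g_def by auto
        have far: "d x z \<ge> \<Delta> / \<alpha>" if zi: "z \<in> g P \<sigma>" for z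
        proof (rule ccontr)
          assume "\<not> ?thesis"
          then have "z \<in> ball_in X d x (\<Delta> / \<alpha>)" using zi x unfolding ball_in_def g_def by auto
          then have "z \<in> cluster P x" using bP by auto
          then have "cluster P z = cluster P x" using cluster_eq[OF pP cx(1)] by auto
          then show False using zi s unfolding g_def by auto
        qed
        have "finite (g P \<sigma>)" using fin unfolding g_def by auto
        then have "setdist_pt d x (g P \<sigma>) \<ge> \<Delta> / \<alpha>"
          unfolding setdist_pt_def using yin far
          by (intro cINF_greatest) auto
        then show "\<sigma> \<in> g P -` E" using yin unfolding E_def by auto
      qed
      have "1/4 = measure_pmf.prob \<tau> {\<sigma>. \<sigma> (cluster P x) = False \<and> \<sigma> (cluster P y) = True}"
        unfolding \<tau>_def using coin_prob[OF _ pw ne] fin by simp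
      also have "\<dots> \<le> measure_pmf.prob \<tau> (g P -` E)"
        by (rule measure_pmf.finite_measure_mono[OF sub]) simp
      finally show ?thesis by simp
    qed
    have "ennreal (1/8) = ennreal (1/4) * ennreal (1/2)" by (rule trans[OF _ ennreal_mult]) auto
    also have "\<dots> \<le> ennreal (1/4) * emeasure \<nu> G"
    proof -
      have "measure_pmf.prob \<nu> G = measure_pmf.prob \<nu> {P. ball_in X d x (\<Delta> / \<alpha>) \<subseteq> cluster P x}"
        unfolding G_def using measure_Int_set_pmf[of \<nu> "{P. ball_in X d x (\<Delta> / \<alpha>) \<subseteq> cluster P x}"]
        by (simp add: Int_def conj_commute)
      then have "measure_pmf.prob \<nu> G \<ge> 1/2" using pad[OF x] by simp
      then have "ennreal (1/2) \<le> emeasure \<nu> G"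
        by (simp only: measure_pmf.emeasure_eq_measure ennreal_leI)
      then show ?thesis by (intro mult_left_mono) auto
    qed
    also have "\<dots> = (\<integral>\<^sup>+P. ennreal (1/4) * indicator G P \<partial>\<nu>)"
      by (simp add: nn_integral_cmult_indicator)
    also have "\<dots> \<le> (\<integral>\<^sup>+P. emeasure (map_pmf (g P) \<tau>) E \<partial>\<nu>)"
    proof (intro nn_integral_mono)
      fix P
      show "ennreal (1/4) * indicator G P \<le> emeasure (map_pmf (g P) \<tau>) E"
      proof (cases "P \<in> G")
        case True
        then show ?thesis using key[OF True]
          by (simp add: measure_pmf.emeasure_eq_measure del: emeasure_map_pmf measure_map_pmf)
      qed simp
    qed
    also have "\<dots> = emeasure \<mu> E" unfolding \<mu>_def by simp
    finally have "ennreal (1/8) \<le> ennreal (measure_pmf.prob \<mu> E)"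
      by (simp add: measure_pmf.emeasure_eq_measure)
    then show ?thesis unfolding E_def by (simp add: ennreal_le_iff)
  qed
  ultimately show ?thesis unfolding random_zero_set_def by blast
qed


lemma exists_bundle:
  assumes ms: "Metric_space X d" and fin: "finite X"
  shows "\<exists>\<alpha>>0. padded_decomposition_bundle X d \<alpha>"
proof -
  interpret M: Metric_space X d by (fact ms)
  define S where "S = (\<lambda>(u,v). d u v) ` {(u,v). u \<in> X \<and> v \<in> X \<and> u \<noteq> v}"
  have finS: "finite S" unfolding S_def
    by (rule finite_imageI, rule finite_subset[of _ "X \<times> X"]) (use fin in auto)
  define \<alpha> where "\<alpha> = (if S = {} then 1 else 2 * (Max S + 1) / Min S)"
  have Spos: "\<And>s. s \<in> S \<Longrightarrow> s > 0" unfolding S_def by auto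
  have Snn: "\<And>s. s \<in> S \<Longrightarrow> s \<ge> 0" using Spos by force
  have ap: "\<alpha> > 0"
  proof (cases "S = {}")
    case False
    have "Min S > 0" using Spos False finS by simp
    moreover have "Max S \<ge> 0" using Snn False finS by (meson Max_in order_trans order_refl)
    ultimately show ?thesis using False unfolding \<alpha>_def by simp
  qed (simp add: \<alpha>_def)
  have "padded_decomposition_bundle X d \<alpha>"
    unfolding padded_decomposition_bundle_def
  proof (intro allI impI)
    fix \<Delta> :: real assume dp: "\<Delta> > 0"
    show "\<exists>\<nu>. padded_random_partition X d \<alpha> \<Delta> \<nu>"
    proof (cases "\<forall>u\<in>X. \<forall>v\<in>X. d u v < \<Delta>")
      case True
      define P where "P = {X} - {{}}"
      have pP: "partition_on X P"
        by (cases "X = {}") (auto simp: P_def partition_on_empty partition_on_space)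
      have cl: "cluster P x = X" if x: "x \<in> X" for x
      proof -
        have "X \<in> P" using x by (auto simp: P_def)
        then show ?thesis using cluster_eq[OF pP _ x] by blast
      qed
      have "padded_random_partition X d \<alpha> \<Delta> (return_pmf P)"
      proof -
        have CX: "\<forall>C\<in>P. C = X" by (simp add: P_def)
        have "ball_in X d x (\<Delta> / \<alpha>) \<subseteq> cluster P x" if "x \<in> X" for x
          unfolding cl[OF that] ball_in_def by (auto simp: M.mcball_def)
        then show ?thesis using pP True CX unfolding padded_random_partition_def
          by (auto simp: indicator_def)
      qed
      then show ?thesis by blast
    next
      case False
      then obtain u v where uv: "u \<in> X" "v \<in> X" "d u v \<ge> \<Delta>" by (auto simp: not_less)
      then have "u \<noteq> v" using dp by auto
      then have dS: "d u v \<in> S" using uv unfolding S_def by auto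
      then have Sne: "S \<noteq> {}" by auto
      have mpos: "Min S > 0" using Spos Sne finS by simp
      have "d u v \<le> Max S" using dS finS by simp
      then have DM: "\<Delta> \<le> Max S" using uv by simp
      have Mnn: "Max S \<ge> 0" using DM dp by simp
      have small: "\<Delta> / \<alpha> < Min S"
      proof -
        have "\<Delta> / \<alpha> = \<Delta> * Min S / (2 * (Max S + 1))" using Sne by (simp add: \<alpha>_def)
        also have "\<dots> < Min S"
          using mpos Mnn DM by (simp add: divide_less_eq)
        finally show ?thesis .
      qed
      define P where "P = (\<lambda>x. {x}) ` X"
      have pP: "partition_on X P"
        unfolding P_def partition_on_def disjoint_def by auto
      have cl: "\<And>x. x \<in> X \<Longrightarrow> cluster P x = {x}"
        using cluster_eq[OF pP] by (auto simp: P_def)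
      have ball: "ball_in X d x (\<Delta> / \<alpha>) \<subseteq> {x}" if x: "x \<in> X" for x
      proof
        fix z assume "z \<in> ball_in X d x (\<Delta> / \<alpha>)"
        then have z: "z \<in> X" "d x z \<le> \<Delta> / \<alpha>" by (auto simp: ball_in_def)
        show "z \<in> {x}"
        proof (rule ccontr)
          assume "z \<notin> {x}"
          then have "d x z \<in> S" using x z unfolding S_def by auto
          then have "Min S \<le> d x z" using finS by simp
          then show False using z small by simp
        qed
      qed
      have "padded_random_partition X d \<alpha> \<Delta> (return_pmf P)"
        unfolding padded_random_partition_def
        using pP cl ball dp by (auto simp: P_def indicator_def)
      then show ?thesis by blast
    qed
  qed
  then show ?thesis using ap by blast
qed

theorem fact3p4:
  fixes X :: "'a set" and d :: "'a \<Rightarrow> 'a \<Rightarrow> real"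
  assumes "finite_metric_space X d"
  shows "zeta_X X d (1/8) \<le> alpha_X X d"
proof -
  have ms: "Metric_space X d" and fin: "finite X"
    using assms unfolding finite_metric_space_def by auto
  have sub: "{\<alpha>. \<alpha> > 0 \<and> padded_decomposition_bundle X d \<alpha>}
      \<subseteq> {\<zeta>. \<zeta> > 0 \<and> (\<forall>\<Delta>>0. random_zero_set X d \<Delta> \<zeta> (1/8))}"
  proof
    fix \<alpha> assume "\<alpha> \<in> {\<alpha>. \<alpha> > 0 \<and> padded_decomposition_bundle X d \<alpha>}"
    then have a: "\<alpha> > 0" "padded_decomposition_bundle X d \<alpha>" by auto
    have "random_zero_set X d \<Delta> \<alpha> (1/8)" if dp: "\<Delta> > 0" for \<Delta>
    proof -
      obtain \<nu> where "padded_random_partition X d \<alpha> \<Delta> \<nu>"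
        using a(2) dp unfolding padded_decomposition_bundle_def by blast
      then show ?thesis using zero_set_from_partition[OF ms fin a(1) dp] by blast
    qed
    then show "\<alpha> \<in> {\<zeta>. \<zeta> > 0 \<and> (\<forall>\<Delta>>0. random_zero_set X d \<Delta> \<zeta> (1/8))}"
      using a by auto
  qed
  have ne: "{\<alpha>. \<alpha> > 0 \<and> padded_decomposition_bundle X d \<alpha>} \<noteq> {}"
    using exists_bundle[OF ms fin] by auto
  have bdd: "bdd_below {\<zeta>. \<zeta> > 0 \<and> (\<forall>\<Delta>>0. random_zero_set X d \<Delta> \<zeta> (1/8))}"
    by (rule bdd_belowI[of _ 0]) auto
  show ?thesis unfolding zeta_X_def alpha_X_def
    by (rule cInf_superset_mono[OF ne bdd sub])
qed

end
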